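(* Let $f\in\mathcal{E}$ be minimal and suppose $d(f^n)$ has linear growth. Then the centralizer $C(f)=\{g\in\mathcal{E}: fg=gf\}$ is virtually cyclic.
   Context: Identify $\mathbb{T}^1=\mathbb{R}/\mathbb{Z}$ with $[0,1)$. An interval exchange transformation is a bijection $f:\mathbb{T}^1\to\mathbb{T}^1$ for which there is a partition of $[0,1)$ into finitely many half-open intervals $[a,b)$ on each of which $f$ is a translation $x\mapsto x+c\pmod 1$. $\mathcal{E}$ is the group of interval exchanges. $d(f)$ is the number of points at which $f$ is discontinuous as a map of the circle $\mathbb{T}^1$. $f$ is minimal if every $f$-orbit is dense in $\mathbb{T}^1$. Linear growth of $d(f^n)$ means there is $c>0$ with $d(f^n)\ge c|n|$ for all sufficiently large $|n|$ (for interval exchanges, $d(f^n)$ is either bounded or grows linearly). *)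

theory Defs
  imports "HOL-Analysis.Analysis"
begin

text \<open>The circle T^1 = R/Z is identified with [0,1). An interval exchange is
represented by a real function that is a bijection of [0,1) and (by convention)
the identity outside [0,1), so that composition and equality of maps are global.\<close>

definition iet :: "(real \<Rightarrow> real) \<Rightarrow> bool" where
  "iet f \<longleftrightarrow> bij_betw f {0..<1} {0..<1} \<and> (\<forall>x. x \<notin> {0..<1} \<longrightarrow> f x = x) \<and>
     (\<exists>(a::nat \<Rightarrow> real) (n::nat). a 0 = 0 \<and> a n = 1 \<and> (\<forall>i<n. a i < a (Suc i)) \<and>
        (\<forall>i<n. \<exists>c. \<forall>x. a i \<le> x \<and> x < a (Suc i) \<longrightarrow> f x = frac (x + c)))"

definition ipow :: "(real \<Rightarrow> real) \<Rightarrow> int \<Rightarrow> (real \<Rightarrow> real)" where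
  "ipow f n = (if 0 \<le> n then f ^^ nat n else (inv f) ^^ nat (- n))"

text \<open>Number of discontinuity points of f as a map of the circle: x is a
continuity point iff t \<mapsto> e(f(frac t)) is continuous at x, where e embeds the circle.\<close>
definition disc :: "(real \<Rightarrow> real) \<Rightarrow> nat" where
  "disc f = card {x \<in> {0..<1}. \<not> isCont (\<lambda>t. cis (2 * pi * f (frac t))) x}"

definition minimal_iet :: "(real \<Rightarrow> real) \<Rightarrow> bool" where
  "minimal_iet f \<longleftrightarrow> (\<forall>x\<in>{0..<1}. {0..<1} \<subseteq> closure {ipow f n x | n. True})"

definition linear_growth :: "(real \<Rightarrow> real) \<Rightarrow> bool" where
  "linear_growth f \<longleftrightarrow> (\<exists>c>0. \<exists>N. \<forall>n::int. N \<le> \<bar>n\<bar> \<longrightarrow> c * of_int \<bar>n\<bar> \<le> real (disc (ipow f n)))"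

definition centralizer :: "(real \<Rightarrow> real) \<Rightarrow> (real \<Rightarrow> real) set" where
  "centralizer f = {g. iet g \<and> f \<circ> g = g \<circ> f}"

definition virtually_cyclic :: "(real \<Rightarrow> real) set \<Rightarrow> bool" where
  "virtually_cyclic C \<longleftrightarrow> (\<exists>h\<in>C. \<exists>F. finite F \<and> F \<subseteq> C \<and>
       C = (\<Union>k\<in>F. (\<lambda>n. k \<circ> ipow h n) ` UNIV))"

end

theory Submission
  imports Defs
begin


definition PF :: "(real \<Rightarrow> real) \<Rightarrow> real set \<Rightarrow> bool" where
"PF u P \<longleftrightarrow> finite P \<and> P \<subseteq> {0..<1} \<and> 0 \<in> P \<and>
   (\<forall>x y. 0 \<le> x \<longrightarrow> x \<le> y \<longrightarrow> y < 1 \<longrightarrow> (\<forall>p\<in>P. \<not>(x<p \<and> p\<le>y)) \<longrightarrow> u y = frac (u x + (y - x)))"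

lemma strict_mono_upto:
  fixes a :: "nat \<Rightarrow> real"
  assumes "\<forall>i<n. a i < a (Suc i)" "i < j" "j \<le> n"
  shows "a i < a j"
  using assms(2,3)
proof (induction j)
  case 0 then show ?case by simp
next
  case (Suc j)
  show ?case
  proof (cases "i = j")
    case True then show ?thesis using assms(1) Suc by auto
  next
    case False then have "a i < a j" using Suc by auto
    also have "a j < a (Suc j)" using assms(1) Suc by auto
    finally show ?thesis .
  qed
qed

lemma iet_imp_PF:
  assumes "iet u" shows "\<exists>P. PF u P"
proof -
  from assms obtain a :: "nat \<Rightarrow> real" and n where a0: "a 0 = 0" and an: "a n = 1"
    and inc: "\<forall>i<n. a i < a (Suc i)"
    and tr: "\<forall>i<n. \<exists>c. \<forall>x. a i \<le> x \<and> x < a (Suc i) \<longrightarrow> u x = frac (x + c)"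
    unfolding iet_def by blast
  have n0: "n > 0" using a0 an by (cases n) auto
  have mono: "a i < a j" if "i < j" "j \<le> n" for i j using strict_mono_upto[OF inc that] .
  have mono': "a i \<le> a j" if "i \<le> j" "j \<le> n" for i j using mono[of i j] that
    by (cases "i = j") auto
  define P where "P = a ` {..<n}"
  have "PF u P"
    unfolding PF_def
  proof (intro conjI allI impI)
    show "finite P" unfolding P_def by simp
    show "P \<subseteq> {0..<1}" unfolding P_def
    proof
      fix p assume "p \<in> a ` {..<n}"
      then obtain i where i: "i < n" "p = a i" by auto
      have "a 0 \<le> a i" using mono'[of 0 i] i by auto
      moreover have "a i < a n" using mono[of i n] i by auto
      ultimately show "p \<in> {0..<1}" using i a0 an by auto
    qed
    show "0 \<in> P" unfolding P_def using a0 n0 by force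
    fix x y assume x0: "0 \<le> x" and xy: "x \<le> y" and y1: "y < 1"
      and np: "\<forall>p\<in>P. \<not> (x < p \<and> p \<le> y)"
    define I where "I = {i. i < n \<and> a i \<le> x}"
    have "0 \<in> I" unfolding I_def using a0 x0 n0 by auto
    have finI: "finite I" unfolding I_def by auto
    define i where "i = Max I"
    have iI: "i \<in> I" unfolding i_def using finI \<open>0 \<in> I\<close> Max_in by blast
    have ilt: "i < n" and aix: "a i \<le> x" using iI unfolding I_def by auto
    have ya: "y < a (Suc i)"
    proof (cases "Suc i < n")
      case True
      have "Suc i \<notin> I" using Max_ge[OF finI] i_def by fastforce
      then have "x < a (Suc i)" using True unfolding I_def by auto
      moreover have "a (Suc i) \<in> P" unfolding P_def using True by auto
      ultimately show ?thesis using np by force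
    next
      case False then have "Suc i = n" using ilt by auto
      then show ?thesis using an y1 by simp
    qed
    obtain c where c: "\<forall>z. a i \<le> z \<and> z < a (Suc i) \<longrightarrow> u z = frac (z + c)" using tr ilt by blast
    have "u x = frac (x + c)" "u y = frac (y + c)" using c aix xy ya by auto
    then show "u y = frac (u x + (y - x))" by (simp add: frac_add_simps add.commute)
  qed
  then show ?thesis by blast
qed

lemma PF_imp_iet:
  assumes "bij_betw u {0..<1} {0..<1}" "\<forall>x. x \<notin> {0..<1} \<longrightarrow> u x = x" "PF u P"
  shows "iet u"
proof -
  have finP: "finite P" and P01: "P \<subseteq> {0..<1}" and P0: "0 \<in> P"
    and tr: "\<And>x y. 0 \<le> x \<Longrightarrow> x \<le> y \<Longrightarrow> y < 1 \<Longrightarrow> (\<forall>p\<in>P. \<not>(x<p \<and> p\<le>y)) \<Longrightarrow> u y = frac (u x + (y - x))"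
    using assms(3) unfolding PF_def by meson+
  obtain l where sl: "sorted_wrt (<) l" and setl: "set l = insert 1 P" and lenl: "length l = card (insert 1 P)"
    using finite_set_strict_sorted[of "insert 1 P"] finP by blast
  have nth_less: "l ! i < l ! j" if "i < j" "j < length l" for i j
    using sorted_wrt_nth_less[OF sl that] .
  have nth_le: "l ! i \<le> l ! j" if "i \<le> j" "j < length l" for i j
    using nth_less[of i j] that by (cases "i = j") auto
  have setl01: "\<forall>z\<in>set l. 0 \<le> z \<and> z \<le> 1" using setl P01 by auto
  have lmem: "\<And>i. i < length l \<Longrightarrow> 0 \<le> l!i \<and> l!i \<le> 1" using setl01 nth_mem by blast
  have "0 \<in> set l" "1 \<in> set l" using setl P0 by auto
  then obtain i0 where i0: "i0 < length l" "l ! i0 = 0" by (meson in_set_conv_nth)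
  obtain i1 where i1: "i1 < length l" "l ! i1 = 1" using \<open>1 \<in> set l\<close> by (meson in_set_conv_nth)
  have len2: "length l \<ge> 2"
  proof -
    have "i0 \<noteq> i1" using i0 i1 by auto
    then show ?thesis using i0 i1 by linarith
  qed
  define n where "n = length l - 1"
  define a where "a = (\<lambda>i. l ! i)"
  have a0: "a 0 = 0"
  proof -
    have "l ! 0 \<le> l ! i0" using nth_le[of 0 i0] i0 by auto
    moreover have "0 < length l" using len2 by linarith
    then have "l ! 0 \<ge> 0" using lmem[of 0] by blast
    ultimately show ?thesis using i0 a_def by auto
  qed
  have an: "a n = 1"
  proof -
    have "l ! i1 \<le> l ! n" using nth_le[of i1 n] i1 n_def by auto
    moreover have "n < length l" using len2 n_def by linarith
    then have "l ! n \<le> 1" using lmem[of n] by blast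
    ultimately show ?thesis using i1 a_def by auto
  qed
  have inc: "\<forall>i<n. a i < a (Suc i)" unfolding a_def n_def using nth_less by auto
  have pieces: "\<forall>i<n. \<exists>c. \<forall>x. a i \<le> x \<and> x < a (Suc i) \<longrightarrow> u x = frac (x + c)"
  proof (intro allI impI)
    fix i assume i: "i < n"
    have "i < length l" using i n_def by linarith
    then have ai0: "0 \<le> a i" using lmem[of i] a_def by blast
    have "Suc i < length l" using i n_def by linarith
    then have ai1: "a (Suc i) \<le> 1" using lmem[of "Suc i"] a_def by blast
    show "\<exists>c. \<forall>x. a i \<le> x \<and> x < a (Suc i) \<longrightarrow> u x = frac (x + c)"
    proof (intro exI allI impI)
      fix x assume x: "a i \<le> x \<and> x < a (Suc i)"
      have np: "\<forall>p\<in>P. \<not>(a i < p \<and> p \<le> x)"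
      proof
        fix p assume "p \<in> P"
        then have "p \<in> set l" using setl by auto
        then obtain j where j: "j < length l" "l ! j = p" by (meson in_set_conv_nth)
        show "\<not>(a i < p \<and> p \<le> x)"
        proof
          assume h: "a i < p \<and> p \<le> x"
          show False
          proof (cases "j \<le> i")
            case True then have "l ! j \<le> l ! i" using nth_le[of j i] i n_def by simp
            then show False using h j a_def by auto
          next
            case False then have "Suc i \<le> j" by auto
            then have "l ! (Suc i) \<le> l ! j" using nth_le[of "Suc i" j] j by simp
            then show False using h j x a_def by auto
          qed
        qed
      qed
      have "u x = frac (u (a i) + (x - a i))" using tr[OF ai0 _ _ np] x ai1 by auto
      then show "u x = frac (x + (u (a i) - a i))" by (simp add: algebra_simps)
    qed
  qed
  show ?thesis unfolding iet_def using assms(1,2) a0 an inc pieces by blast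
qed




lemma PF_D:
  assumes "PF u P"
  shows "finite P" "P \<subseteq> {0..<1}" "0 \<in> P"
    "\<And>x y. 0 \<le> x \<Longrightarrow> x \<le> y \<Longrightarrow> y < 1 \<Longrightarrow> (\<And>p. p\<in>P \<Longrightarrow> \<not>(x<p \<and> p\<le>y)) \<Longrightarrow> u y = frac (u x + (y - x))"
  using assms unfolding PF_def by meson+

lemma PF_I:
  assumes "finite P" "P \<subseteq> {0..<1}" "0 \<in> P"
    "\<And>x y. 0 \<le> x \<Longrightarrow> x \<le> y \<Longrightarrow> y < 1 \<Longrightarrow> (\<And>p. p\<in>P \<Longrightarrow> \<not>(x<p \<and> p\<le>y)) \<Longrightarrow> u y = frac (u x + (y - x))"
  shows "PF u P"
  using assms unfolding PF_def by meson

lemma iet_D: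
  assumes "iet u"
  shows "bij_betw u {0..<1} {0..<1}" "\<And>x. x \<notin> {0..<1} \<Longrightarrow> u x = x" "\<exists>P. PF u P"
  using assms iet_imp_PF unfolding iet_def by blast+

lemma iet_bij: assumes "iet u" shows "bij u"
proof -
  have b: "bij_betw u {0..<1} {0..<1}" and o: "\<And>x. x \<notin> {0..<1} \<Longrightarrow> u x = x" using iet_D[OF assms] by auto
  have "inj u"
  proof (rule injI)
    fix x y assume e: "u x = u y"
    show "x = y"
    proof (cases "x \<in> {0..<1}"; cases "y \<in> {0..<1}")
      assume "x \<in> {0..<1}" "y \<in> {0..<1}" then show ?thesis using b e unfolding bij_betw_def inj_on_def by blast
    next
      assume "x \<in> {0..<1}" "y \<notin> {0..<1}" then show ?thesis using b e o[of y] unfolding bij_betw_def by force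
    next
      assume "x \<notin> {0..<1}" "y \<in> {0..<1}" then show ?thesis using b e o[of x] unfolding bij_betw_def by force
    next
      assume "x \<notin> {0..<1}" "y \<notin> {0..<1}" then show ?thesis using e o by auto
    qed
  qed
  moreover have "surj u"
  proof -
    have "y \<in> range u" for y
    proof (cases "y \<in> {0..<1}")
      case True then show ?thesis using b unfolding bij_betw_def by force
    next
      case False then show ?thesis using o[of y] by (metis rangeI)
    qed
    then show ?thesis by blast
  qed
  ultimately show ?thesis unfolding bij_def by blast
qed

lemma iet_maps: assumes "iet u" "x \<in> {0..<1}" shows "u x \<in> {0..<1}"
  using iet_D(1)[OF assms(1)] assms(2) unfolding bij_betw_def by blast

lemma iet_inj01: assumes "iet u" "x \<in> {0..<1}" "y \<in> {0..<1}" "u x = u y" shows "x = y"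
  using iet_D(1)[OF assms(1)] assms(2-) unfolding bij_betw_def inj_on_def by blast

lemma iet_id: "iet id"
proof -
  have "PF id {0}"
    by (rule PF_I) (auto simp: frac_eq)
  then show ?thesis using PF_imp_iet[of id "{0}"] by (simp add: bij_betw_id)
qed

lemma iet_comp:
  assumes u: "iet u" and v: "iet v" shows "iet (u \<circ> v)"
proof -
  obtain Pu where Pu: "PF u Pu" using iet_D(3)[OF u] by blast
  obtain Pv where Pv: "PF v Pv" using iet_D(3)[OF v] by blast
  define P where "P = Pv \<union> {x\<in>{0..<1}. v x \<in> Pu}"
  have finP: "finite P"
  proof -
    have "{x\<in>{0..<1}. v x \<in> Pu} \<subseteq> inv v ` Pu"
    proof
      fix x assume "x \<in> {x\<in>{0..<1}. v x \<in> Pu}"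
      then show "x \<in> inv v ` Pu" using iet_bij[OF v] by (metis (mono_tags, lifting) bij_is_inj inv_f_f image_eqI mem_Collect_eq)
    qed
    then show ?thesis unfolding P_def using PF_D(1)[OF Pu] PF_D(1)[OF Pv] finite_subset by blast
  qed
  have "PF (u \<circ> v) P"
  proof (rule PF_I)
    show "finite P" by (rule finP)
    show "P \<subseteq> {0..<1}" unfolding P_def using PF_D(2)[OF Pv] by auto
    show "0 \<in> P" unfolding P_def using PF_D(3)[OF Pv] by auto
    fix x y assume x0: "0 \<le> x" and xy: "x \<le> y" and y1: "y < 1" and np: "\<And>p. p \<in> P \<Longrightarrow> \<not>(x<p \<and> p\<le>y)"
    have npv: "\<And>p. p \<in> Pv \<Longrightarrow> \<not>(x<p \<and> p\<le>z)" if "z \<le> y" for z using np that unfolding P_def by force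
    have vz: "v z = frac (v x + (z - x))" if "x \<le> z" "z \<le> y" for z
      using PF_D(4)[OF Pv x0 that(1) _ npv[OF that(2)]] that y1 by linarith
    have vx: "v x \<in> {0..<1}" using iet_maps[OF v] x0 xy y1 by auto
    have nowrap: "v x + (y - x) < 1"
    proof (rule ccontr)
      assume "\<not> v x + (y - x) < 1"
      define z where "z = x + (1 - v x)"
      have z: "x < z" "z \<le> y" using vx \<open>\<not> v x + (y - x) < 1\<close> unfolding z_def by auto
      have "v z = frac 1" using vz[of z] z unfolding z_def by simp
      then have "v z = 0" by simp
      then have "z \<in> P" unfolding P_def using PF_D(3)[OF Pu] z x0 y1 by auto
      then show False using np z by blast
    qed
    have vy: "v y = v x + (y - x)" using vz[of y] xy nowrap vx by (simp add: frac_eq)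
    have npu: "\<not>(v x < p \<and> p \<le> v y)" if "p \<in> Pu" for p
    proof
      assume h: "v x < p \<and> p \<le> v y"
      define z where "z = x + (p - v x)"
      have z: "x < z" "z \<le> y" using h vy unfolding z_def by auto
      have "p \<in> {0..<1}" using PF_D(2)[OF Pu] that by auto
      then have "v z = p" using vz[of z] z unfolding z_def by (simp add: frac_eq)
      then have "z \<in> P" unfolding P_def using that z x0 y1 by auto
      then show False using np z by blast
    qed
    have "u (v y) = frac (u (v x) + (v y - v x))"
      using PF_D(4)[OF Pu _ _ _ npu] vx vy xy nowrap by auto
    then show "(u \<circ> v) y = frac ((u \<circ> v) x + (y - x))" using vy by simp
  qed
  moreover have "bij_betw (u \<circ> v) {0..<1} {0..<1}"
    using bij_betw_trans iet_D(1)[OF u] iet_D(1)[OF v] by blast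
  moreover have "\<forall>x. x \<notin> {0..<1} \<longrightarrow> (u \<circ> v) x = x" using iet_D(2)[OF u] iet_D(2)[OF v] by simp
  ultimately show ?thesis using PF_imp_iet by blast
qed




lemma iet_inv_facts:
  assumes u: "iet u"
  shows "\<And>s. s \<in> {0..<1} \<Longrightarrow> inv u s \<in> {0..<1}" "\<And>s. u (inv u s) = s" "\<And>x. inv u (u x) = x"
    "\<And>x. x \<notin> {0..<1} \<Longrightarrow> inv u x = x"
proof -
  have b: "bij u" using iet_bij[OF u] .
  show us: "\<And>s. u (inv u s) = s" using b by (simp add: bij_is_surj surj_f_inv_f)
  show "\<And>x. inv u (u x) = x" using b by (simp add: bij_is_inj)
  show "inv u s \<in> {0..<1}" if "s \<in> {0..<1}" for s
  proof (rule ccontr)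
    assume "inv u s \<notin> {0..<1}"
    then have "u (inv u s) = inv u s" using iet_D(2)[OF u] by blast
    then show False using us[of s] that \<open>inv u s \<notin> {0..<1}\<close> by simp
  qed
  show "inv u x = x" if "x \<notin> {0..<1}" for x
    using iet_D(2)[OF u that] b by (metis bij_is_inj inv_f_f)
qed

lemma iet_inv:
  assumes u: "iet u" shows "iet (inv u)"
proof -
  obtain P where P: "PF u P" using iet_D(3)[OF u] by blast
  note iv = iet_inv_facts[OF u]
  have finP: "finite P" and P01: "P \<subseteq> {0..<1}" and P0: "0 \<in> P" using PF_D[OF P] by auto
  note tr = PF_D(4)[OF P]
  define Q where "Q = insert 0 (u ` P)"
  have "PF (inv u) Q"
  proof (rule PF_I)
    show "finite Q" unfolding Q_def using finP by simp
    show "Q \<subseteq> {0..<1}" unfolding Q_def using P01 iet_maps[OF u] by auto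
    show "0 \<in> Q" unfolding Q_def by simp
    fix s s' assume s0: "0 \<le> s" and ss': "s \<le> s'" and s'1: "s' < 1" and nq: "\<And>q. q \<in> Q \<Longrightarrow> \<not>(s<q \<and> q\<le>s')"
    define x where "x = inv u s"
    have x01: "x \<in> {0..<1}" unfolding x_def using iv(1) s0 ss' s'1 by auto
    have ux: "u x = s" unfolding x_def using iv(2) by simp
    define d where "d = s' - s"
    define R where "R = {p \<in> insert 1 P. x < p}"
    have finR: "finite R" unfolding R_def using finP by auto
    have R1: "1 \<in> R" unfolding R_def using x01 by auto
    define r where "r = Min R"
    have rR: "r \<in> R" unfolding r_def using finR R1 Min_in by blast
    have xr: "x < r" using rR unfolding R_def by auto
    have r1: "r \<le> 1" unfolding r_def using Min_le[OF finR R1] .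
    have rmin: "\<And>p. p \<in> P \<Longrightarrow> x < p \<Longrightarrow> r \<le> p" unfolding r_def R_def using finR Min_le R_def by auto
    have ut: "u t = s + (t - x)" if "x \<le> t" "t < r" "t - x \<le> d" for t
    proof -
      have "u t = frac (u x + (t - x))"
        using tr[of x t] x01 that r1 rmin by force
      also have "\<dots> = s + (t - x)" using ux that s0 s'1 d_def by (simp add: frac_eq)
      finally show ?thesis .
    qed
    show "inv u s' = frac (inv u s + (s' - s))"
    proof (cases "x + d < r")
      case True
      have "u (x + d) = s'" using ut[of "x + d"] True ss' d_def by simp
      then have "inv u s' = x + d" using iv(3) by metis
      then show ?thesis using True r1 x01 d_def ss' x_def by (simp add: frac_eq)
    next
      case False
      define w where "w = s + (r - x)"
      have w: "s < w" "w \<le> s'" using False xr unfolding w_def d_def by auto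
      define z where "z = inv u w"
      have z01: "z \<in> {0..<1}" unfolding z_def using iv(1) w s0 s'1 by auto
      have uz: "u z = w" unfolding z_def using iv(2) by simp
      define L where "L = {p \<in> P. p \<le> z}"
      have finL: "finite L" unfolding L_def using finP by auto
      have L0: "0 \<in> L" unfolding L_def using P0 z01 by auto
      define p where "p = Max L"
      have pL: "p \<in> L" unfolding p_def using finL L0 Max_in by blast
      have pz: "p \<le> z" and pP: "p \<in> P" using pL unfolding L_def by auto
      have pmax: "\<And>q. q \<in> P \<Longrightarrow> q \<le> z \<Longrightarrow> q \<le> p" unfolding p_def L_def using finL Max_ge L_def by auto
      have p0: "0 \<le> p" using pP P01 by auto
      have "p \<noteq> z"
      proof
        assume "p = z"
        then have "w \<in> Q" using uz pP unfolding Q_def by auto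
        then show False using nq w by blast
      qed
      then have pz': "p < z" using pz by auto
      define e where "e = min (min (z - p) (r - x)) w"
      have e0: "e > 0" unfolding e_def using pz' xr w s0 by auto
      define t where "t = r - e/2"
      define z' where "z' = z - e/2"
      have ele: "e \<le> r - x" "e \<le> z - p" "e \<le> w" unfolding e_def by auto
      have "x \<le> t" "t < r" "t - x \<le> d" unfolding t_def using ele e0 False d_def by auto
      then have "u t = w - e/2" using ut[of t] unfolding t_def w_def by simp
      moreover have "u z' = w - e/2"
      proof -
        have npz: "\<And>q. q \<in> P \<Longrightarrow> \<not>(p<q \<and> q\<le>z')" using pmax unfolding z'_def using e0 by force
        have npz2: "\<And>q. q \<in> P \<Longrightarrow> \<not>(p<q \<and> q\<le>z)" using pmax by force
        have a1: "u z' = frac (u p + (z' - p))" using tr[OF p0 _ _ npz] e0 z01 pz' ele unfolding z'_def by auto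
        have a2: "u z = frac (u p + (z - p))" using tr[OF p0 _ _ npz2] z01 pz' by auto
        have "u z' = frac ((u p + (z - p)) - e/2)" using a1 unfolding z'_def by (simp add: algebra_simps)
        also have "\<dots> = frac (frac (u p + (z - p)) - e/2)" using frac_add_simps(1)[of "u p + (z - p)" "- (e/2)"] by simp
        also have "\<dots> = frac (w - e/2)" using a2 uz by simp
        also have "\<dots> = w - e/2" using e0 w s0 s'1 ele by (simp add: frac_eq)
        finally show ?thesis .
      qed
      ultimately have "u t = u z'" by simp
      moreover have "t \<in> {0..<1}" "z' \<in> {0..<1}" unfolding t_def z'_def using xr x01 r1 z01 pz' e0 p0 ele by auto
      ultimately have "t = z'" using iet_inj01[OF u] by blast
      then have "z = r" unfolding t_def z'_def by simp
      then have "r \<in> P" using rR z01 unfolding R_def by auto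
      then have "w \<in> Q" using uz \<open>z = r\<close> unfolding Q_def by auto
      then show ?thesis using nq w by blast
    qed
  qed
  moreover have "bij_betw (inv u) {0..<1} {0..<1}"
  proof -
    have "inv u ` {0..<1} = {0..<1}"
    proof
      show "inv u ` {0..<1} \<subseteq> {0..<1}" using iv(1) by auto
      show "{0..<1} \<subseteq> inv u ` {0..<1}"
      proof
        fix x assume x: "x \<in> {0..<1::real}"
        then have "u x \<in> {0..<1}" using iet_maps[OF u] by auto
        then show "x \<in> inv u ` {0..<1}" using iv(3)[of x] by (metis image_eqI)
      qed
    qed
    moreover have "inj_on (inv u) {0..<1}" using iv(2) by (metis inj_on_inverseI)
    ultimately show ?thesis unfolding bij_betw_def by blast
  qed
  moreover have "\<forall>x. x \<notin> {0..<1} \<longrightarrow> inv u x = x" using iv(4) by blast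
  ultimately show ?thesis using PF_imp_iet by blast
qed




definition G :: "(real \<Rightarrow> real) \<Rightarrow> real \<Rightarrow> complex" where
  "G u = (\<lambda>t. cis (2 * pi * u (frac t)))"

definition D :: "(real \<Rightarrow> real) \<Rightarrow> real set" where
  "D u = {x \<in> {0..<1}. \<not> isCont (G u) x}"

lemma disc_D: "disc u = card (D u)"
  unfolding disc_def D_def G_def by simp

lemma cis_frac: "cis (2 * pi * frac a) = cis (2 * pi * a)"
proof -
  have "a = frac a + of_int \<lfloor>a\<rfloor>" by (simp add: frac_def)
  then have "cis (2 * pi * a) = cis (2 * pi * frac a + 2 * pi * of_int \<lfloor>a\<rfloor>)"
    by (metis distrib_left)
  also have "\<dots> = cis (2 * pi * frac a) * cis (2 * pi * of_int \<lfloor>a\<rfloor>)" by (rule cis_mult[symmetric])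
  also have "cis (2 * pi * of_int \<lfloor>a\<rfloor>) = 1" by (rule cis_multiple_2pi) simp
  finally show ?thesis by simp
qed

lemma cis_inj01:
  assumes "a \<in> {0..<1}" "b \<in> {0..<1}" "cis (2 * pi * a) = cis (2 * pi * b)"
  shows "a = b"
proof (rule ccontr)
  have gen: "False" if "a' \<in> {0..<1}" "b' \<in> {0..<1}" "cis (2 * pi * a') = cis (2 * pi * b')" "b' < a'" for a' b'
  proof -
    define d where "d = a' - b'"
    have d: "0 < d" "d < 1" using that unfolding d_def by auto
    have "cis (2 * pi * a') = cis (2 * pi * d) * cis (2 * pi * b')"
      by (simp add: cis_mult d_def algebra_simps)
    then have "cis (2 * pi * d) = 1" using that(3) by (metis mult_cancel_right2 cis_neq_zero)
    moreover have "exp (\<i> * complex_of_real (2 * pi * d)) \<noteq> 1" by (rule exp_i_ne_1) (use d in auto)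
    ultimately show False by (simp add: cis_conv_exp)
  qed
  assume "a \<noteq> b"
  then show False using gen[of a b] gen[of b a] assms by (cases "a < b") auto
qed

lemma isCont_cis_lin: "isCont (\<lambda>t. cis (2 * pi * (t + c))) x"
  unfolding cis_conv_exp by (intro continuous_intros)

lemma G_shift_int: "G u (s + of_int k) = G u s"
  unfolding G_def by (simp add: frac_add_of_int_right)

lemma isCont_G_frac:
  assumes "isCont (G u) (frac s)" shows "isCont (G u) s"
proof -
  define k where "k = \<lfloor>s\<rfloor>"
  have eq: "G u = (\<lambda>y. G u (y - of_int k))"
  proof
    fix y show "G u y = G u (y - of_int k)" using G_shift_int[of u "y - of_int k" k] by simp
  qed
  have "isCont (\<lambda>y. y - of_int k) s" by (intro continuous_intros)
  moreover have "isCont (G u) ((\<lambda>y. y - of_int k) s)" using assms by (simp add: k_def frac_def)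
  ultimately have "isCont (\<lambda>y. G u (y - of_int k)) s" by (rule isCont_o2)
  then show ?thesis by (simp only: eq[symmetric])
qed

lemma iet_RT:
  assumes u: "iet u" and x: "x \<in> {0..<1}"
  shows "\<exists>\<delta>>0. \<exists>c. \<forall>t. x \<le> t \<and> t < x + \<delta> \<longrightarrow> u (frac t) = frac (t + c)"
proof -
  obtain P where P: "PF u P" using iet_D(3)[OF u] by blast
  have finP: "finite P" and P01: "P \<subseteq> {0..<1}" and P0: "0 \<in> P" using PF_D[OF P] by auto
  note tr = PF_D(4)[OF P]
  define R where "R = {p \<in> insert 1 P. x < p}"
  have finR: "finite R" unfolding R_def using finP by auto
  have R1: "1 \<in> R" unfolding R_def using x by auto
  define r where "r = Min R"
  have rR: "r \<in> R" unfolding r_def using finR R1 Min_in by blast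
  have xr: "x < r" using rR unfolding R_def by auto
  have r1: "r \<le> 1" unfolding r_def using Min_le[OF finR R1] .
  have rmin: "\<And>p. p \<in> P \<Longrightarrow> x < p \<Longrightarrow> r \<le> p" unfolding r_def R_def using finR Min_le R_def by auto
  show ?thesis
  proof (intro exI conjI allI impI)
    show "r - x > 0" using xr by simp
    fix t assume t: "x \<le> t \<and> t < x + (r - x)"
    have ft: "frac t = t" using t x r1 by (simp add: frac_eq)
    have "u t = frac (u x + (t - x))" using tr[of x t] x t r1 rmin by force
    then show "u (frac t) = frac (t + (u x - x))" using ft by (simp add: algebra_simps)
  qed
qed

lemma iet_LT:
  assumes u: "iet u" and x: "x \<in> {0..<1}"
  shows "\<exists>\<delta>>0. \<exists>c. \<forall>t. x - \<delta> < t \<and> t < x \<longrightarrow> u (frac t) = frac (t + c)"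
proof -
  obtain P where P: "PF u P" using iet_D(3)[OF u] by blast
  have finP: "finite P" and P01: "P \<subseteq> {0..<1}" and P0: "0 \<in> P" using PF_D[OF P] by auto
  note tr = PF_D(4)[OF P]
  show ?thesis
  proof (cases "x = 0")
    case False
    then have x0: "0 < x" using x by auto
    define L where "L = {p \<in> P. p < x}"
    have finL: "finite L" unfolding L_def using finP by auto
    have L0: "0 \<in> L" unfolding L_def using P0 x0 by auto
    define l where "l = Max L"
    have lL: "l \<in> L" unfolding l_def using finL L0 Max_in by blast
    have lx: "l < x" and lP: "l \<in> P" using lL unfolding L_def by auto
    have l0: "0 \<le> l" using lP P01 by auto
    have lmax: "\<And>q. q \<in> P \<Longrightarrow> q < x \<Longrightarrow> q \<le> l" unfolding l_def L_def using finL Max_ge L_def by auto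
    show ?thesis
    proof (intro exI conjI allI impI)
      show "x - l > 0" using lx by simp
      fix t assume t: "x - (x - l) < t \<and> t < x"
      have ft: "frac t = t" using t x l0 by (simp add: frac_eq)
      have "u t = frac (u l + (t - l))" using tr[of l t] l0 t x lmax by force
      then show "u (frac t) = frac (t + (u l - l))" using ft by (simp add: algebra_simps)
    qed
  next
    case True
    define l where "l = Max P"
    have lP: "l \<in> P" unfolding l_def using finP P0 Max_in by blast
    have l1: "l < 1" and l0: "0 \<le> l" using lP P01 by auto
    have lmax: "\<And>q. q \<in> P \<Longrightarrow> q \<le> l" unfolding l_def using finP Max_ge by auto
    show ?thesis
    proof (intro exI conjI allI impI)
      show "1 - l > 0" using l1 by simp
      fix t assume t: "x - (1 - l) < t \<and> t < x"
      have ft: "frac t = t + 1"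
      proof -
        have "frac (t + 1) = t + 1" using t True l0 by (simp add: frac_eq)
        then show ?thesis by (simp add: frac_1_eq)
      qed
      have "u (t + 1) = frac (u l + (t + 1 - l))" using tr[of l "t+1"] l0 t True lmax by force
      also have "\<dots> = frac ((t + (u l - l)) + 1)" by (simp add: algebra_simps)
      also have "\<dots> = frac (t + (u l - l))" by (rule frac_1_eq)
      finally show "u (frac t) = frac (t + (u l - l))" using ft by simp
    qed
  qed
qed

lemma D_finite:
  assumes u: "iet u" shows "finite (D u)"
proof -
  obtain P where P: "PF u P" using iet_D(3)[OF u] by blast
  have finP: "finite P" and P01: "P \<subseteq> {0..<1}" and P0: "0 \<in> P" using PF_D[OF P] by auto
  note tr = PF_D(4)[OF P]
  have "D u \<subseteq> P"
  proof
    fix x assume xD: "x \<in> D u"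
    then have x: "x \<in> {0..<1}" unfolding D_def by auto
    show "x \<in> P"
    proof (rule ccontr)
      assume xP: "x \<notin> P"
      then have x0: "0 < x" using x P0 by (cases "x = 0") auto
      define L where "L = {p \<in> P. p < x}"
      have finL: "finite L" unfolding L_def using finP by auto
      have L0: "0 \<in> L" unfolding L_def using P0 x0 by auto
      define l where "l = Max L"
      have lL: "l \<in> L" unfolding l_def using finL L0 Max_in by blast
      have lx: "l < x" and lP: "l \<in> P" using lL unfolding L_def by auto
      have l0: "0 \<le> l" using lP P01 by auto
      have lmax: "\<And>q. q \<in> P \<Longrightarrow> q < x \<Longrightarrow> q \<le> l" unfolding l_def L_def using finL Max_ge L_def by auto
      define R where "R = {p \<in> insert 1 P. x < p}"
      have finR: "finite R" unfolding R_def using finP by auto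
      have R1: "1 \<in> R" unfolding R_def using x by auto
      define r where "r = Min R"
      have rR: "r \<in> R" unfolding r_def using finR R1 Min_in by blast
      have xr: "x < r" using rR unfolding R_def by auto
      have r1: "r \<le> 1" unfolding r_def using Min_le[OF finR R1] .
      have rmin: "\<And>p. p \<in> P \<Longrightarrow> x < p \<Longrightarrow> r \<le> p" unfolding r_def R_def using finR Min_le R_def by auto
      have eq: "G u t = cis (2 * pi * (t + (u l - l)))" if "t \<in> {l<..<r}" for t
      proof -
        have ft: "frac t = t" using that l0 r1 by (simp add: frac_eq)
        have np: "\<And>p. p \<in> P \<Longrightarrow> \<not>(l<p \<and> p\<le>t)"
        proof
          fix p assume p: "p \<in> P" "l < p \<and> p \<le> t"
          show False
          proof (cases "p < x")
            case True then show False using lmax[OF p(1)] p by auto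
          next
            case False
            then have "x < p" using xP p by (cases "p = x") auto
            then show False using rmin[OF p(1)] p that by auto
          qed
        qed
        have "u t = frac (u l + (t - l))" using tr[OF l0 _ _ np] that r1 by auto
        then have "G u t = cis (2 * pi * frac (t + (u l - l)))" unfolding G_def using ft by (simp add: algebra_simps)
        then show ?thesis using cis_frac by simp
      qed
      have ev: "\<forall>\<^sub>F t in nhds x. G u t = cis (2 * pi * (t + (u l - l)))"
      proof -
        have "eventually (\<lambda>t. t \<in> {l<..<r}) (nhds x)" by (rule eventually_nhds_in_open) (use lx xr in auto)
        then show ?thesis using eq by (rule eventually_mono)
      qed
      have "isCont (\<lambda>t. cis (2 * pi * (t + (u l - l)))) x" by (rule isCont_cis_lin)
      then have "isCont (G u) x" using isCont_cong[OF ev] by simp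
      then show False using xD unfolding D_def by simp
    qed
  qed
  then show ?thesis using finP finite_subset by blast
qed

lemma D_id: "D id = {}"
proof -
  have "G id = (\<lambda>t. cis (2 * pi * t))" unfolding G_def by (simp add: cis_frac)
  moreover have "isCont (\<lambda>t. cis (2 * pi * t)) x" for x using isCont_cis_lin[where c=0 and x=x] by simp
  ultimately show ?thesis unfolding D_def by simp
qed




lemma D_comp:
  assumes u: "iet u" and v: "iet v" and x: "x \<in> {0..<1}" and xv: "x \<notin> D v" and vxu: "v x \<notin> D u"
  shows "x \<notin> D (u \<circ> v)"
proof -
  obtain \<delta>1 c where d1: "\<delta>1 > 0" and c: "\<And>t. x \<le> t \<and> t < x + \<delta>1 \<Longrightarrow> v (frac t) = frac (t + c)"
    using iet_RT[OF v x] by blast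
  obtain \<delta>2 c' where d2: "\<delta>2 > 0" and c': "\<And>t. x - \<delta>2 < t \<and> t < x \<Longrightarrow> v (frac t) = frac (t + c')"
    using iet_LT[OF v x] by blast
  have cv: "isCont (G v) x" using xv x unfolding D_def by auto
  have fx: "frac x = x" using x by (simp add: frac_eq)
  have vx: "v x = frac (x + c)" using c[of x] d1 fx by simp
  have Gx: "G v x = cis (2 * pi * (x + c))" unfolding G_def using fx vx cis_frac by simp
  have l1: "(G v \<longlongrightarrow> G v x) (at_left x)"
    using continuous_at_imp_continuous_at_within[OF cv, of "{..<x}"] unfolding continuous_within .
  have ev: "\<forall>\<^sub>F t in at_left x. cis (2 * pi * (t + c')) = G v t"
  proof -
    have "\<forall>\<^sub>F t in at_left x. t \<in> {x - \<delta>2<..<x}" by (rule eventually_at_left_real) (use d2 in simp)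
    then show ?thesis
    proof (rule eventually_mono)
      fix t assume "t \<in> {x - \<delta>2<..<x}"
      then have "v (frac t) = frac (t + c')" using c' by auto
      then show "cis (2 * pi * (t + c')) = G v t" unfolding G_def using cis_frac by simp
    qed
  qed
  have l2: "((\<lambda>t. cis (2 * pi * (t + c'))) \<longlongrightarrow> cis (2 * pi * (x + c'))) (at_left x)"
    using continuous_at_imp_continuous_at_within[OF isCont_cis_lin[where c=c' and x=x], of "{..<x}"] unfolding continuous_within by simp
  have l3: "((\<lambda>t. cis (2 * pi * (t + c'))) \<longlongrightarrow> G v x) (at_left x)"
    using l1 tendsto_cong[OF ev] by simp
  have eqc: "cis (2 * pi * (x + c')) = cis (2 * pi * (x + c))"
    using tendsto_unique[OF trivial_limit_at_left_real l2 l3] Gx by simp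
  define \<delta> where "\<delta> = min \<delta>1 \<delta>2"
  have vloc: "v (frac t) = frac (t + c)" if "x - \<delta> < t" "t < x + \<delta>" for t
  proof (cases "x \<le> t")
    case True then show ?thesis using c that \<delta>_def by auto
  next
    case False
    then have h: "v (frac t) = frac (t + c')" using c' that \<delta>_def by auto
    have "cis (2 * pi * (t + c')) = cis (2 * pi * (t - x)) * cis (2 * pi * (x + c'))"
      by (simp add: cis_mult algebra_simps)
    also have "\<dots> = cis (2 * pi * (t - x)) * cis (2 * pi * (x + c))" using eqc by simp
    also have "\<dots> = cis (2 * pi * (t + c))" by (simp add: cis_mult algebra_simps)
    finally have "cis (2 * pi * frac (t + c')) = cis (2 * pi * frac (t + c))" by (simp add: cis_frac)
    then have "frac (t + c') = frac (t + c)" by (rule cis_inj01[rotated 2]) (auto simp: frac_lt_1)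
    then show ?thesis using h by simp
  qed
  have d0: "\<delta> > 0" unfolding \<delta>_def using d1 d2 by simp
  have evn: "\<forall>\<^sub>F t in nhds x. G u (t + c) = G (u \<circ> v) t"
  proof -
    have "\<forall>\<^sub>F t in nhds x. t \<in> {x - \<delta><..<x + \<delta>}" by (rule eventually_nhds_in_open) (use d0 in auto)
    then show ?thesis
    proof (rule eventually_mono)
      fix t assume "t \<in> {x - \<delta><..<x + \<delta>}"
      then have "v (frac t) = frac (t + c)" using vloc by auto
      then show "G u (t + c) = G (u \<circ> v) t" unfolding G_def by simp
    qed
  qed
  have "isCont (G u) (v x)" using vxu iet_maps[OF v x] unfolding D_def by auto
  then have "isCont (G u) (x + c)" using vx isCont_G_frac by simp
  moreover have h1: "isCont (\<lambda>t. t + c) x" by (intro continuous_intros)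
  ultimately have "isCont (\<lambda>t. G u (t + c)) x" using isCont_o2[OF h1] by simp
  then have "isCont (G (u \<circ> v)) x" using isCont_cong[OF evn] by simp
  then show ?thesis unfolding D_def by simp
qed




lemma iet_funpow: "iet f \<Longrightarrow> iet (f ^^ n)"
  by (induction n) (auto simp: iet_id iet_comp)

lemma iet_ipow: "iet f \<Longrightarrow> iet (ipow f n)"
  unfolding ipow_def using iet_funpow iet_inv by auto

lemma funpow_add_apply: "(f ^^ (m + n)) x = (f ^^ m) ((f ^^ n) x)"
  by (simp add: funpow_add)

lemma inv_funpow_cancel:
  assumes "bij f"
  shows "((inv f) ^^ n) ((f ^^ n) x) = x" "(f ^^ n) (((inv f) ^^ n) x) = x"
proof -
  show "((inv f) ^^ n) ((f ^^ n) x) = x"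
  proof (induction n arbitrary: x)
    case 0 then show ?case by simp
  next
    case (Suc n)
    have e1: "(f ^^ Suc n) x = (f ^^ n) (f x)" by (simp add: funpow_swap1)
    have "((inv f) ^^ Suc n) ((f ^^ Suc n) x) = inv f (((inv f) ^^ n) ((f ^^ n) (f x)))"
      unfolding e1 by simp
    also have "\<dots> = inv f (f x)" using Suc by simp
    also have "\<dots> = x" using assms by (simp add: bij_is_inj)
    finally show ?case .
  qed
  show "(f ^^ n) (((inv f) ^^ n) x) = x"
  proof (induction n arbitrary: x)
    case 0 then show ?case by simp
  next
    case (Suc n)
    have e1: "((inv f) ^^ Suc n) x = ((inv f) ^^ n) (inv f x)" by (simp add: funpow_swap1)
    have "(f ^^ Suc n) (((inv f) ^^ Suc n) x) = f ((f ^^ n) (((inv f) ^^ n) (inv f x)))"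
      unfolding e1 by simp
    also have "\<dots> = f (inv f x)" using Suc by simp
    also have "\<dots> = x" using assms by (simp add: bij_is_surj surj_f_inv_f)
    finally show ?case .
  qed
qed

lemma comm_funpow: "g \<circ> f = f \<circ> g \<Longrightarrow> g \<circ> (f ^^ n) = (f ^^ n) \<circ> g"
proof
  fix x assume c: "g \<circ> f = f \<circ> g"
  have gf: "g (f y) = f (g y)" for y using c by (metis comp_apply)
  show "(g \<circ> f ^^ n) x = (f ^^ n \<circ> g) x"
    by (induction n) (auto simp: gf)
qed

lemma comm_inv:
  assumes "bij f" "g \<circ> f = f \<circ> g" shows "g \<circ> inv f = inv f \<circ> g"
proof
  fix y
  have "f (g (inv f y)) = g (f (inv f y))" using assms(2) by (metis comp_apply)
  also have "\<dots> = g y" using assms(1) by (simp add: bij_is_surj surj_f_inv_f)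
  finally have "f (g (inv f y)) = g y" .
  then have "inv f (g y) = g (inv f y)" using assms(1) by (metis bij_is_inj inv_f_f)
  then show "(g \<circ> inv f) y = (inv f \<circ> g) y" by simp
qed

lemma comm_ipow:
  assumes "bij f" "g \<circ> f = f \<circ> g" shows "g \<circ> ipow f n = ipow f n \<circ> g"
  unfolding ipow_def using comm_funpow[OF assms(2)] comm_funpow[OF comm_inv[OF assms]] by auto

lemma ipow_diff:
  assumes "bij f" shows "((inv f) ^^ a) \<circ> (f ^^ b) = ipow f (int b - int a)"
proof
  fix x
  show "(((inv f) ^^ a) \<circ> (f ^^ b)) x = ipow f (int b - int a) x"
  proof (cases "a \<le> b")
    case True
    have "(f ^^ b) x = (f ^^ a) ((f ^^ (b - a)) x)" using True funpow_add_apply[where f=f and m=a and n="b - a" and x=x] by simp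
    then have "(((inv f) ^^ a) \<circ> (f ^^ b)) x = (f ^^ (b - a)) x" using inv_funpow_cancel(1)[OF assms] by simp
    moreover have "nat (int b - int a) = b - a" using True by simp
    ultimately show ?thesis using True unfolding ipow_def by simp
  next
    case False
    have "((inv f) ^^ a) y = ((inv f) ^^ (a - b)) (((inv f) ^^ b) y)" for y
      using False funpow_add_apply[where f="inv f" and m="a - b" and n=b and x=y] by simp
    then have "(((inv f) ^^ a) \<circ> (f ^^ b)) x = ((inv f) ^^ (a - b)) x" using inv_funpow_cancel(1)[OF assms] by simp
    moreover have "nat (- (int b - int a)) = a - b" using False by simp
    ultimately show ?thesis using False unfolding ipow_def by simp
  qed
qed

lemma funpow_maps: "iet f \<Longrightarrow> x \<in> {0..<1} \<Longrightarrow> (f ^^ n) x \<in> {0..<1}"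
  using iet_maps iet_funpow by blast

lemma aperiodic:
  assumes f: "iet f" and m: "minimal_iet f" and x: "x \<in> {0..<1}" and p: "p > 0"
  shows "(f ^^ p) x \<noteq> x"
proof
  assume per: "(f ^^ p) x = x"
  have b: "bij f" using iet_bij[OF f] .
  define S where "S = (\<lambda>j. (f ^^ j) x) ` {..<p}"
  have finS: "finite S" unfolding S_def by simp
  have inS: "(f ^^ k) x \<in> S" for k
  proof -
    have "(f ^^ k) x = (f ^^ (k mod p)) x" using funpow_mod_eq[OF per] by simp
    then show ?thesis unfolding S_def using p by auto
  qed
  have permul: "(f ^^ (k * p)) x = x" for k
  proof (induction k)
    case 0 then show ?case by simp
  next
    case (Suc k)
    have "(f ^^ (Suc k * p)) x = (f ^^ p) ((f ^^ (k * p)) x)" by (simp add: funpow_add)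
    then show ?case using Suc per by simp
  qed
  have orb: "ipow f n x \<in> S" for n
  proof (cases "0 \<le> n")
    case True then show ?thesis unfolding ipow_def using inS by simp
  next
    case False
    define k where "k = nat (- n)"
    have kp: "k \<le> k * p" using p by simp
    have "((inv f) ^^ k) x = ((inv f) ^^ k) ((f ^^ k) ((f ^^ (k * p - k)) x))"
      using permul[of k] kp funpow_add_apply[where f=f and m=k and n="k * p - k" and x=x] by simp
    also have "\<dots> = (f ^^ (k * p - k)) x" using inv_funpow_cancel(1)[OF b] by simp
    finally show ?thesis unfolding ipow_def k_def[symmetric] using False inS by simp
  qed
  have "{ipow f n x | n. True} \<subseteq> S" using orb by auto
  then have "closure {ipow f n x | n. True} \<subseteq> S" using finS closure_minimal finite_imp_closed by blast
  then have "{0..<1} \<subseteq> S" using m x unfolding minimal_iet_def by blast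
  then have "finite {0..<1::real}" using finS finite_subset by blast
  then show False using infinite_Ico[of "0::real" 1] by simp
qed

lemma orbit_inj:
  assumes f: "iet f" and m: "minimal_iet f" and x: "x \<in> {0..<1}" and e: "(f ^^ a) x = (f ^^ b) x"
  shows "a = b"
proof (rule ccontr)
  have gen: False if "a' < b'" "(f ^^ a') x = (f ^^ b') x" for a' b'
  proof -
    have "(f ^^ (b' - a')) ((f ^^ a') x) = (f ^^ b') x" using that(1) funpow_add_apply[where f=f and m="b' - a'" and n=a' and x=x] by simp
    then show False using aperiodic[OF f m funpow_maps[OF f x], of "b' - a'"] that by simp
  qed
  assume "a \<noteq> b"
  then show False using gen[of a b] gen[of b a] e by (cases "a < b") auto
qed

lemma orbit_finite_hits:
  assumes f: "iet f" and m: "minimal_iet f" and x: "x \<in> {0..<1}" and S: "finite S"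
  shows "finite {n. (f ^^ n) x \<in> S}"
proof -
  have "inj_on (\<lambda>n. (f ^^ n) x) {n. (f ^^ n) x \<in> S}"
    using orbit_inj[OF f m x] by (auto simp: inj_on_def)
  moreover have "(\<lambda>n. (f ^^ n) x) ` {n. (f ^^ n) x \<in> S} \<subseteq> S" by auto
  then have "finite ((\<lambda>n. (f ^^ n) x) ` {n. (f ^^ n) x \<in> S})" using S finite_subset by blast
  ultimately show ?thesis using finite_imageD by blast
qed




lemma unique_comm:
  assumes f: "iet f" and m: "minimal_iet f" and u: "iet u" and v: "iet v"
    and cu: "u \<circ> f = f \<circ> u" and cv: "v \<circ> f = f \<circ> v" and p: "p \<in> {0..<1}" and e: "u p = v p"
  shows "u = v"
proof
  fix x
  have b: "bij f" using iet_bij[OF f] .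
  have orb: "u (ipow f n p) = v (ipow f n p)" for n
  proof -
    have "u (ipow f n p) = ipow f n (u p)" using comm_ipow[OF b cu, of n] by (metis comp_apply)
    also have "\<dots> = ipow f n (v p)" using e by simp
    also have "\<dots> = v (ipow f n p)" using comm_ipow[OF b cv, of n] by (metis comp_apply)
    finally show ?thesis .
  qed
  show "u x = v x"
  proof (cases "x \<in> {0..<1}")
    case False then show ?thesis using iet_D(2)[OF u] iet_D(2)[OF v] by simp
  next
    case True
    obtain \<delta>1 c where d1: "\<delta>1 > 0" and c: "\<And>t. x \<le> t \<and> t < x + \<delta>1 \<Longrightarrow> u (frac t) = frac (t + c)"
      using iet_RT[OF u True] by blast
    obtain \<delta>2 d where d2: "\<delta>2 > 0" and d: "\<And>t. x \<le> t \<and> t < x + \<delta>2 \<Longrightarrow> v (frac t) = frac (t + d)"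
      using iet_RT[OF v True] by blast
    define \<delta> where "\<delta> = min (min \<delta>1 \<delta>2) (1 - x)"
    have d0: "\<delta> > 0" unfolding \<delta>_def using d1 d2 True by auto
    have dle: "\<delta> \<le> \<delta>1" "\<delta> \<le> \<delta>2" "\<delta> \<le> 1 - x" unfolding \<delta>_def by auto
    have x': "x + \<delta>/2 \<in> {0..<1}" using d0 True dle by auto
    then have "x + \<delta>/2 \<in> closure {ipow f n p | n. True}" using m p unfolding minimal_iet_def by blast
    then obtain y where yo: "y \<in> {ipow f n p | n. True}" and dy: "dist y (x + \<delta>/2) < \<delta>/2"
      using d0 closure_approachable[of "x + \<delta>/2" "{ipow f n p | n. True}"] half_gt_zero by blast
    have yr: "x \<le> y" "y < x + \<delta>" using dy by (auto simp: dist_real_def abs_if split: if_splits)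
    have y01: "frac y = y" using yr True dle by (simp add: frac_eq)
    have "u y = v y" using yo orb by auto
    then have "frac (y + c) = frac (y + d)" using c[of y] d[of y] yr y01 dle by auto
    then obtain k where k: "y + c = y + d + of_int k" by (rule frac_eqE)
    then have "x + c = (x + d) + of_int k" by simp
    then have "frac (x + c) = frac (x + d)" by (metis frac_add_of_int_right)
    moreover have "frac x = x" using True by (simp add: frac_eq)
    ultimately show ?thesis using c[of x] d[of x] d1 d2 by simp
  qed
qed




lemma D_sub: "x \<in> D u \<Longrightarrow> x \<in> {0..<1}" unfolding D_def by auto

lemma D_comp_cases:
  assumes "iet u" "iet v" "x \<in> D (u \<circ> v)" shows "x \<in> D v \<or> v x \<in> D u"
  using D_comp[OF assms(1,2) D_sub[OF assms(3)]] assms(3) by blast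

lemma D_funpow:
  assumes g: "iet g" shows "y \<in> D (g ^^ k) \<Longrightarrow> \<exists>i<k. (g ^^ i) y \<in> D g"
proof (induction k)
  case 0 then show ?case using D_id by (simp add: id_def[symmetric])
next
  case (Suc k)
  have "y \<in> D (g \<circ> g ^^ k)" using Suc.prems by (simp add: comp_def)
  then have "y \<in> D (g ^^ k) \<or> (g ^^ k) y \<in> D g" using D_comp_cases[OF g iet_funpow[OF g]] by blast
  then show ?case using Suc.IH less_Suc_eq by blast
qed

lemma funpow_inv_split:
  assumes b: "bij f" and nn: "n \<le> n'"
  shows "f ^^ n = ((inv f) ^^ (n' - n)) \<circ> (f ^^ n')"
proof
  fix x
  have "(f ^^ n') x = (f ^^ (n' - n)) ((f ^^ n) x)" using nn funpow_add_apply[where f=f and m="n' - n" and n=n and x=x] by simp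
  then show "(f ^^ n) x = (((inv f) ^^ (n' - n)) \<circ> (f ^^ n')) x" using inv_funpow_cancel(1)[OF b] by simp
qed

context
  fixes f :: "real \<Rightarrow> real"
  assumes f: "iet f" and m: "minimal_iet f"
begin

definition "Dinf = {x \<in> {0..<1}. \<exists>N. \<forall>n\<ge>N. x \<in> D (f ^^ n)}"

lemma bijf: "bij f" using iet_bij[OF f] .

lemma stable:
  assumes x: "x \<in> D (f ^^ n)" and nn: "n \<le> n'" and x': "x \<notin> D (f ^^ n')"
  shows "\<exists>j. n < j \<and> (f ^^ j) x \<in> D (inv f)"
proof -
  have "x \<in> D (((inv f) ^^ (n' - n)) \<circ> (f ^^ n'))" using x funpow_inv_split[OF bijf nn] by simp
  then have "(f ^^ n') x \<in> D ((inv f) ^^ (n' - n))"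
    using D_comp_cases[OF iet_funpow[OF iet_inv[OF f]] iet_funpow[OF f]] x' by blast
  then obtain i where i: "i < n' - n" "((inv f) ^^ i) ((f ^^ n') x) \<in> D (inv f)"
    using D_funpow[OF iet_inv[OF f]] by blast
  have "(f ^^ n') x = (f ^^ i) ((f ^^ (n' - i)) x)" using i(1) funpow_add_apply[where f=f and m=i and n="n' - i" and x=x] by simp
  then have "((inv f) ^^ i) ((f ^^ n') x) = (f ^^ (n' - i)) x" using inv_funpow_cancel(1)[OF bijf] by simp
  then show ?thesis using i by (intro exI[of _ "n' - i"]) auto
qed

lemma Dinf_infinite:
  assumes lg: "linear_growth f" shows "infinite Dinf"
proof
  assume finD: "finite Dinf"
  define B where "B = D f"
  define B' where "B' = D (inv f)"
  have finB: "finite B" unfolding B_def using D_finite[OF f] .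
  have finB': "finite B'" unfolding B'_def using D_finite[OF iet_inv[OF f]] .
  have B01: "B \<subseteq> {0..<1}" unfolding B_def D_def by auto
  define T where "T = {k. \<exists>b\<in>B. (f ^^ k) b \<in> B'}"
  have finT: "finite T"
  proof -
    have "T = (\<Union>b\<in>B. {k. (f ^^ k) b \<in> B'})" unfolding T_def by auto
    then show ?thesis using finB orbit_finite_hits[OF f m _ finB'] B01 by auto
  qed
  define M where "M = Sigma B (\<lambda>_. Sigma T (\<lambda>k. {..<k}))"
  have finM: "finite M" unfolding M_def using finB finT by (intro finite_SigmaI) auto
  have sub: "D (f ^^ n) \<subseteq> Dinf \<union> (\<lambda>(b, k, t). ((inv f) ^^ (n - 1 - t)) b) ` M" for n
  proof
    fix x assume x: "x \<in> D (f ^^ n)"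
    show "x \<in> Dinf \<union> (\<lambda>(b, k, t). ((inv f) ^^ (n - 1 - t)) b) ` M"
    proof (cases "x \<in> Dinf")
      case True then show ?thesis by simp
    next
      case False
      have "\<exists>n'\<ge>n. x \<notin> D (f ^^ n')"
      proof (rule ccontr)
        assume "\<not> (\<exists>n'\<ge>n. x \<notin> D (f ^^ n'))"
        then have "x \<in> Dinf" unfolding Dinf_def using D_sub[OF x] by auto
        then show False using False by simp
      qed
      then obtain n' where "n \<le> n'" "x \<notin> D (f ^^ n')" by blast
      then obtain j where j: "n < j" "(f ^^ j) x \<in> B'" using stable[OF x] B'_def by blast
      obtain i where i: "i < n" "(f ^^ i) x \<in> B" using D_funpow[OF f x] B_def by blast
      define b where "b = (f ^^ i) x"
      define k where "k = j - i"
      define t where "t = n - 1 - i"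
      have "(f ^^ j) x = (f ^^ k) b" unfolding k_def b_def using i j funpow_add_apply[where f=f and m="j - i" and n=i and x=x] by simp
      then have kT: "k \<in> T" unfolding T_def using i j b_def by auto
      have tk: "t < k" unfolding t_def k_def using i j by auto
      have mem: "(b, k, t) \<in> M" unfolding M_def using i b_def kT tk by auto
      have "n - 1 - t = i" unfolding t_def using i by auto
      then have "((inv f) ^^ (n - 1 - t)) b = x" unfolding b_def using inv_funpow_cancel(1)[OF bijf] by simp
      then show ?thesis using mem by force
    qed
  qed
  define K where "K = card Dinf + card M"
  have bound: "disc (f ^^ n) \<le> K" for n
  proof -
    have "card (D (f ^^ n)) \<le> card (Dinf \<union> (\<lambda>(b, k, t). ((inv f) ^^ (n - 1 - t)) b) ` M)"
      using sub finD finM by (intro card_mono) auto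
    also have "\<dots> \<le> card Dinf + card ((\<lambda>(b, k, t). ((inv f) ^^ (n - 1 - t)) b) ` M)" by (rule card_Un_le)
    also have "\<dots> \<le> K" unfolding K_def using card_image_le[OF finM] by simp
    finally show ?thesis by (simp add: disc_D)
  qed
  obtain c N where c: "c > 0" and cN: "\<And>n::int. N \<le> \<bar>n\<bar> \<Longrightarrow> c * of_int \<bar>n\<bar> \<le> real (disc (ipow f n))"
    using lg unfolding linear_growth_def by blast
  obtain n :: nat where n: "n > K / c" "int n \<ge> N"
  proof -
    obtain n1 :: nat where "n1 > K / c" using reals_Archimedean2 by blast
    then show ?thesis using that[of "max n1 (nat N)"] by (simp add: le_max_iff_disj)
  qed
  have "c * real n \<le> real (disc (f ^^ n))" using cN[of "int n"] n unfolding ipow_def by simp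
  also have "\<dots> \<le> real K" using bound by simp
  finally have "c * real n \<le> K" .
  moreover have "c * real n > K" using n(1) c by (simp add: field_simps)
  ultimately show False by simp
qed

end



lemma Dinf_inv:
  assumes f: "iet f" and m: "minimal_iet f" and g: "g \<in> centralizer f"
    and x: "x \<in> Dinf f" and xg: "x \<notin> D g"
  shows "g x \<in> Dinf f"
proof -
  have ig: "iet g" and cg: "g \<circ> f = f \<circ> g" using g unfolding centralizer_def by auto
  have x01: "x \<in> {0..<1}" and "\<exists>N. \<forall>n\<ge>N. x \<in> D (f ^^ n)" using x unfolding Dinf_def[OF f m] by auto
  then obtain N1 where N1: "\<And>n. n \<ge> N1 \<Longrightarrow> x \<in> D (f ^^ n)" by blast
  have gx: "g x \<in> {0..<1}" using iet_maps[OF ig x01] .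
  have "finite {n. (f ^^ n) (g x) \<in> D (inv g)}"
    using orbit_finite_hits[OF f m gx D_finite[OF iet_inv[OF ig]]] .
  then obtain N2 where N2': "\<forall>n\<in>{n. (f ^^ n) (g x) \<in> D (inv g)}. n < N2"
    unfolding finite_nat_set_iff_bounded by blast
  then have N2: "\<And>n. (f ^^ n) (g x) \<in> D (inv g) \<Longrightarrow> n < N2" by blast
  have bg: "bij g" using iet_bij[OF ig] .
  have "g x \<in> D (f ^^ n)" if n: "n \<ge> max N1 N2" for n
  proof -
    have eq: "f ^^ n = (inv g \<circ> f ^^ n) \<circ> g"
    proof
      fix y
      have "g ((f ^^ n) y) = (f ^^ n) (g y)" using comm_funpow[OF cg, of n] by (metis comp_apply)
      then show "(f ^^ n) y = ((inv g \<circ> f ^^ n) \<circ> g) y" using bg by (metis bij_is_inj comp_apply inv_f_f)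
    qed
    have "x \<in> D ((inv g \<circ> f ^^ n) \<circ> g)" using N1[of n] n eq by simp
    then have "g x \<in> D (inv g \<circ> f ^^ n)"
      using D_comp_cases[OF iet_comp[OF iet_inv[OF ig] iet_funpow[OF f]] ig] xg by blast
    then have "g x \<in> D (f ^^ n) \<or> (f ^^ n) (g x) \<in> D (inv g)"
      using D_comp_cases[OF iet_inv[OF ig] iet_funpow[OF f]] by blast
    moreover have "(f ^^ n) (g x) \<notin> D (inv g)" using N2[of n] n by auto
    ultimately show ?thesis by blast
  qed
  then show ?thesis unfolding Dinf_def[OF f m] using gx by blast
qed

lemma Dinf_orbits:
  assumes f: "iet f" and m: "minimal_iet f" and x: "x \<in> Dinf f"
  shows "\<exists>b\<in>D f. \<exists>i. (f ^^ i) x = b"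
proof -
  obtain N where "\<And>n. n \<ge> N \<Longrightarrow> x \<in> D (f ^^ n)" using x unfolding Dinf_def[OF f m] by auto
  then have "x \<in> D (f ^^ N)" by simp
  then show ?thesis using D_funpow[OF f] by blast
qed

theorem proposition5p3:
  fixes f :: "real \<Rightarrow> real"
  assumes "iet f" and "minimal_iet f" and "linear_growth f"
  shows "virtually_cyclic (centralizer f)"
proof -
  note f = assms(1) and m = assms(2)
  have bf: "bij f" using iet_bij[OF f] .
  define B where "B = D f"
  have finB: "finite B" unfolding B_def using D_finite[OF f] .
  define Y where "Y = (\<lambda>b. {x \<in> Dinf f. \<exists>i. (f ^^ i) x = b})"
  have "Dinf f = (\<Union>b\<in>B. Y b)" unfolding Y_def B_def using Dinf_orbits[OF f m] by auto
  have "\<exists>b\<in>B. infinite (Y b)"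
  proof (rule ccontr)
    assume "\<not> (\<exists>b\<in>B. infinite (Y b))"
    then have "finite (\<Union>b\<in>B. Y b)" using finB by blast
    then show False using Dinf_infinite[OF f m assms(3)] \<open>Dinf f = (\<Union>b\<in>B. Y b)\<close> by simp
  qed
  then obtain b0 where b0B: "b0 \<in> B" and infY: "infinite (Y b0)" by blast
  have b001: "b0 \<in> {0..<1}" using b0B unfolding B_def D_def by auto
  define C where "C = centralizer f"
  have Cf: "\<And>g. g \<in> C \<Longrightarrow> iet g \<and> g \<circ> f = f \<circ> g" unfolding C_def centralizer_def by auto
  define rel where "rel = (\<lambda>g b. \<exists>i j. (f ^^ i) (g b0) = (f ^^ j) b)"
  have key: "\<exists>b\<in>B. rel g b" if g: "g \<in> C" for g
  proof -
    have "infinite (Y b0 - D g)" using infY D_finite[of g] Cf[OF g] by auto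
    then obtain q where q: "q \<in> Y b0" "q \<notin> D g" using infinite_imp_nonempty by blast
    then obtain i where qi: "(f ^^ i) q = b0" and qD: "q \<in> Dinf f" unfolding Y_def by auto
    have "g q \<in> Dinf f" using Dinf_inv[OF f m _ qD q(2)] g unfolding C_def by blast
    then obtain b j where b: "b \<in> B" and bj: "(f ^^ j) (g q) = b" using Dinf_orbits[OF f m] B_def by blast
    have gcomm: "g ((f ^^ n) y) = (f ^^ n) (g y)" for n y using comm_funpow[of g f n] Cf[OF g] by (metis comp_apply)
    have "g b0 = (f ^^ i) (g q)" using gcomm[of i q] qi by metis
    then have "(f ^^ j) (g b0) = (f ^^ j) ((f ^^ i) (g q))" by simp
    also have "\<dots> = (f ^^ i) ((f ^^ j) (g q))" by (metis funpow_add_apply add.commute)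
    also have "\<dots> = (f ^^ i) b" using bj by simp
    finally show ?thesis unfolding rel_def using b by blast
  qed
  define B1 where "B1 = {b \<in> B. \<exists>g\<in>C. rel g b}"
  define Gb where "Gb = (\<lambda>b. SOME g. g \<in> C \<and> rel g b)"
  have Gb: "Gb b \<in> C \<and> rel (Gb b) b" if "b \<in> B1" for b
    using that unfolding B1_def Gb_def by (metis (mono_tags, lifting) mem_Collect_eq someI_ex)
  define F where "F = Gb ` B1"
  have finF: "finite F" unfolding F_def B1_def using finB by auto
  have FC: "F \<subseteq> C" unfolding F_def using Gb by auto
  have fC: "f \<in> C" unfolding C_def centralizer_def using f by auto
  have "C = (\<Union>k\<in>F. (\<lambda>n. k \<circ> ipow f n) ` UNIV)"
  proof
    show "C \<subseteq> (\<Union>k\<in>F. (\<lambda>n. k \<circ> ipow f n) ` UNIV)"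
    proof
      fix g assume g: "g \<in> C"
      obtain b where bB: "b \<in> B" and r: "rel g b" using key[OF g] by blast
      then have bB1: "b \<in> B1" unfolding B1_def using g by blast
      define k where "k = Gb b"
      have kC: "k \<in> C" and rk: "rel k b" using Gb[OF bB1] unfolding k_def by auto
      obtain i j where ij: "(f ^^ i) (g b0) = (f ^^ j) b" using r unfolding rel_def by blast
      obtain i' j' where ij': "(f ^^ i') (k b0) = (f ^^ j') b" using rk unfolding rel_def by blast
      have e1: "(f ^^ (j' + i)) (g b0) = (f ^^ (j + i')) (k b0)"
      proof -
        have "(f ^^ (j' + i)) (g b0) = (f ^^ j') ((f ^^ j) b)" using ij funpow_add_apply[where f=f and m=j' and n=i] by simp
        also have "\<dots> = (f ^^ j) ((f ^^ j') b)" by (metis funpow_add_apply add.commute)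
        also have "\<dots> = (f ^^ (j + i')) (k b0)" using ij' funpow_add_apply[where f=f and m=j and n=i'] by simp
        finally show ?thesis .
      qed
      define a where "a = j' + i"
      define c where "c = j + i'"
      have comm2: "(f ^^ n \<circ> h) \<circ> f = f \<circ> (f ^^ n \<circ> h)" if "h \<circ> f = f \<circ> h" for n h
      proof -
        have hf: "h (f y) = f (h y)" for y using that by (metis comp_apply)
        show ?thesis by (simp add: fun_eq_iff hf funpow_swap1)
      qed
      have ueq: "f ^^ a \<circ> g = f ^^ c \<circ> k"
        using unique_comm[OF f m iet_comp[OF iet_funpow[OF f] conjunct1[OF Cf[OF g]]]
            iet_comp[OF iet_funpow[OF f] conjunct1[OF Cf[OF kC]]]
            comm2[OF conjunct2[OF Cf[OF g]]] comm2[OF conjunct2[OF Cf[OF kC]]] b001]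
          e1 unfolding a_def c_def by simp
      have "g = ((inv f) ^^ a) \<circ> (f ^^ a \<circ> g)" using inv_funpow_cancel(1)[OF bf] by (simp add: fun_eq_iff)
      also have "\<dots> = ((inv f) ^^ a \<circ> f ^^ c) \<circ> k" using ueq by (simp add: comp_assoc)
      also have "\<dots> = ipow f (int c - int a) \<circ> k" using ipow_diff[OF bf] by simp
      also have "\<dots> = k \<circ> ipow f (int c - int a)" using comm_ipow[OF bf conjunct2[OF Cf[OF kC]]] by simp
      finally have "g = k \<circ> ipow f (int c - int a)" .
      moreover have "k \<in> F" unfolding F_def k_def using bB1 by blast
      ultimately show "g \<in> (\<Union>k\<in>F. (\<lambda>n. k \<circ> ipow f n) ` UNIV)" by blast
    qed
    show "(\<Union>k\<in>F. (\<lambda>n. k \<circ> ipow f n) ` UNIV) \<subseteq> C"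
    proof
      fix g assume "g \<in> (\<Union>k\<in>F. (\<lambda>n. k \<circ> ipow f n) ` UNIV)"
      then obtain k n where k: "k \<in> F" and gk: "g = k \<circ> ipow f n" by blast
      have kC: "iet k" "k \<circ> f = f \<circ> k" using Cf FC k by auto
      have "iet g" unfolding gk using iet_comp[OF kC(1) iet_ipow[OF f]] .
      moreover have "f \<circ> g = g \<circ> f"
      proof -
        have "ipow f n \<circ> f = f \<circ> ipow f n" using comm_ipow[OF bf, of f n] by simp
        then show ?thesis unfolding gk using kC(2) by (metis comp_assoc)
      qed
      ultimately show "g \<in> C" unfolding C_def centralizer_def by blast
    qed
  qed
  then show ?thesis unfolding virtually_cyclic_def C_def[symmetric] using fC finF FC by blast
qed



end
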